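(* Consider $N$ players $\mathcal{N}=\{1,\dots,N\}$. Player $i$ has decision variable $x_i\in\mathcal{X}_i\subset\mathbb{R}^{m_i}$, $m:=\sum_i m_i$, $\mathcal{X}:=\prod_i\mathcal{X}_i$, and differentiable objective $J_i:\mathbb{R}^m\to\mathbb{R}$. For each ordered pair $i\neq j$ let $\Theta_{i,j}\subseteq\mathbb{R}^d$, $\Theta:=\prod_{i\neq j}\Theta_{i,j}$, and let $\gamma_i^j:\mathcal{X}_i\times\Theta_{i,j}\to\mathcal{X}_j$ be differentiable in $x_i$; write $\theta_i=(\theta_{i,j})_{j\neq i}$, $\gamma_i^{-i}(x_i;\theta_i)=(\gamma_i^j(x_i;\theta_{i,j}))_{j\neq i}$. Let $\mathscr{F}:\mathcal{X}\to\mathbb{R}$, and let $(x^*,\theta^* )$ be a solution of $$\min_{\theta\in\Theta,\,x\in\mathcal{X}}\ \mathscr{F}(x)\quad\text{s.t.}\quad \nabla_i J_i(x_i,\gamma_i^{-i}(x_i;\theta_i))+\nabla_{-i}J_i(x_i,\gamma_i^{-i}(x_i;\theta_i))^\top\nabla_i\gamma_i^{-i}(x_i;\theta_i)=0\ \forall i,\qquad \gamma_i^j(x_i;\theta_{i,j})=x_j\ \forall i\neq j.$$ Assume that for each player $i$, the conjectured objective $x_i\mapsto J_i(x_i,\gamma_i^{-i}(x_i;\theta_i^* ))$ is pseudo-convex on $\mathcal{X}_i$. Then $x^*$ is an equilibrium of the game in which each player $i$ independently solves $\min_{x_i}J_i(x_i,\gamma_i^{-i}(x_i;\theta_i^* ))$;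 that is, for every $i$, $x_i^*$ is a global minimizer of $x_i\mapsto J_i(x_i,\gamma_i^{-i}(x_i;\theta_i^* ))$, so the equilibrium $x^N(\theta^* )$ of this game coincides with $x^*$.
   Context: A differentiable function $f:\mathcal{Y}\subseteq\mathbb{R}^k\to\mathbb{R}$ is pseudo-convex if for all $a,b\in\mathcal{Y}$, $\nabla f(a)^\top(b-a)\ge 0$ implies $f(b)\ge f(a)$. $\nabla_i$ denotes the partial derivative with respect to $x_i$, and $\nabla_{-i}J_i$ the stack of partial derivatives of $J_i$ with respect to $x_j$, $j\neq i$. *)

theory Defs
  imports "HOL-Analysis.Analysis"
begin

text \<open>Model: the joint decision space R^m is real^'c, where the finite type 'c indexes
  all m coordinates; blk assigns each coordinate to its player (players = finite type 'p,
  N = CARD('p)). Player i's space R^{m_i} is the coordinate subspace blk_space blk i.\<close>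

definition blk_space :: "('c::finite \<Rightarrow> 'p) \<Rightarrow> 'p \<Rightarrow> (real^'c) set" where
  "blk_space blk i = {v. \<forall>c. blk c \<noteq> i \<longrightarrow> v $ c = 0}"

definition blk_proj :: "('c::finite \<Rightarrow> 'p) \<Rightarrow> 'p \<Rightarrow> real^'c \<Rightarrow> real^'c" where
  "blk_proj blk i x = (\<chi> c. if blk c = i then x $ c else 0)"

text \<open>The joint point (x_i, gamma_i^{-i}(x_i; theta_i)).\<close>
definition conj_point ::
  "('c::finite \<Rightarrow> 'p::finite) \<Rightarrow> ('p \<Rightarrow> 'p \<Rightarrow> real^'c \<Rightarrow> real^'d \<Rightarrow> real^'c)
     \<Rightarrow> 'p \<Rightarrow> ('p \<Rightarrow> real^'d) \<Rightarrow> real^'c \<Rightarrow> real^'c" where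
  "conj_point blk \<gamma> i \<theta>i xi =
     blk_proj blk i xi + (\<Sum>j\<in>-{i}. blk_proj blk j (\<gamma> i j xi (\<theta>i j)))"

text \<open>Pseudo-convexity of a differentiable f on Y, where f is a function on the
  Euclidean space E (here a coordinate subspace); the gradient pairing
  grad f(a)^T (b-a) is the Frechet derivative of f (on E) at a applied to b - a.\<close>
definition pseudo_convex_on :: "'a::real_normed_vector set \<Rightarrow> 'a set \<Rightarrow> ('a \<Rightarrow> real) \<Rightarrow> bool" where
  "pseudo_convex_on E Y f \<longleftrightarrow> Y \<subseteq> E \<and> (\<forall>a\<in>Y. f differentiable (at a within E)) \<and>
     (\<forall>a\<in>Y. \<forall>b\<in>Y. frechet_derivative f (at a within E) (b - a) \<ge> 0 \<longrightarrow> f b \<ge> f a)"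

text \<open>Feasible set of the bilevel problem: theta in Theta, x in X = prod X_i,
  the stationarity constraint
  grad_i J_i + grad_{-i} J_i^T grad_i gamma_i^{-i} = 0 (written as a linear functional on R^{m_i}),
  and the consistency constraints gamma_i^j(x_i; theta_ij) = x_j.\<close>
definition feasible ::
  "('c::finite \<Rightarrow> 'p::finite) \<Rightarrow> ('p \<Rightarrow> (real^'c) set) \<Rightarrow> ('p \<Rightarrow> 'p \<Rightarrow> (real^'d::finite) set)
     \<Rightarrow> ('p \<Rightarrow> real^'c \<Rightarrow> real) \<Rightarrow> ('p \<Rightarrow> 'p \<Rightarrow> real^'c \<Rightarrow> real^'d \<Rightarrow> real^'c)
     \<Rightarrow> real^'c \<Rightarrow> ('p \<Rightarrow> 'p \<Rightarrow> real^'d) \<Rightarrow> bool" where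
  "feasible blk Xs Th J \<gamma> x \<theta> \<longleftrightarrow>
     (\<forall>i j. i \<noteq> j \<longrightarrow> \<theta> i j \<in> Th i j) \<and>
     (\<forall>i. blk_proj blk i x \<in> Xs i) \<and>
     (\<forall>i. \<forall>v\<in>blk_space blk i.
        frechet_derivative (J i) (at (conj_point blk \<gamma> i (\<theta> i) (blk_proj blk i x))) (blk_proj blk i v)
        + (\<Sum>j\<in>-{i}. frechet_derivative (J i) (at (conj_point blk \<gamma> i (\<theta> i) (blk_proj blk i x)))
             (blk_proj blk j
               (frechet_derivative (\<lambda>y. \<gamma> i j y (\<theta> i j)) (at (blk_proj blk i x) within blk_space blk i) v)))
        = 0) \<and>
     (\<forall>i j. i \<noteq> j \<longrightarrow> \<gamma> i j (blk_proj blk i x) (\<theta> i j) = blk_proj blk j x)"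

end

theory Submission
  imports Defs
begin

lemma deriv_agree_subspace:
  fixes f :: "'a::real_normed_vector \<Rightarrow> 'b::real_normed_vector"
  assumes d1: "(f has_derivative f1) (at a within S)"
    and d2: "(f has_derivative f2) (at a within S)"
    and S: "subspace S" and a: "a \<in> S" and v: "v \<in> S"
  shows "f1 v = f2 v"
proof -
  let ?p = "\<lambda>t::real. a + t *\<^sub>R v"
  have pd: "(?p has_derivative (\<lambda>t. t *\<^sub>R v)) (at 0)"
    by (auto intro!: derivative_eq_intros)
  have img: "?p ` UNIV \<subseteq> S" using S a v by (auto intro!: subspace_add subspace_scale)
  have p0: "?p 0 = a" by simp
  have d1': "(f has_derivative f1) (at (?p 0) within ?p ` UNIV)"
    using has_derivative_subset[OF d1 img] by simp
  have d2': "(f has_derivative f2) (at (?p 0) within ?p ` UNIV)"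
    using has_derivative_subset[OF d2 img] by simp
  have "((f \<circ> ?p) has_derivative (f1 \<circ> (\<lambda>t. t *\<^sub>R v))) (at 0)"
    using diff_chain_within[OF pd d1'] by simp
  moreover have "((f \<circ> ?p) has_derivative (f2 \<circ> (\<lambda>t. t *\<^sub>R v))) (at 0)"
    using diff_chain_within[OF pd d2'] by simp
  ultimately have "f1 \<circ> (\<lambda>t. t *\<^sub>R v) = f2 \<circ> (\<lambda>t. t *\<^sub>R v)"
    by (rule has_derivative_unique)
  then show ?thesis by (metis comp_apply scaleR_one)
qed

lemma blk_proj_bl: "bounded_linear (blk_proj blk i)"
proof -
  have "linear (blk_proj blk i)"
    by (rule linearI) (auto simp: blk_proj_def vec_eq_iff)
  then show ?thesis by (simp add: linear_conv_bounded_linear)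
qed

lemma blk_space_subspace: "subspace (blk_space blk i)"
  unfolding subspace_def blk_space_def by auto

theorem theorem2:
  fixes blk :: "'c::finite \<Rightarrow> 'p::finite"
    and Xs :: "'p \<Rightarrow> (real^'c) set"
    and J :: "'p \<Rightarrow> real^'c \<Rightarrow> real"
    and Th :: "'p \<Rightarrow> 'p \<Rightarrow> (real^'d::finite) set"
    and \<gamma> :: "'p \<Rightarrow> 'p \<Rightarrow> real^'c \<Rightarrow> real^'d \<Rightarrow> real^'c"
    and F :: "real^'c \<Rightarrow> real"
    and xs :: "real^'c"
    and \<theta>s :: "'p \<Rightarrow> 'p \<Rightarrow> real^'d"
  assumes X_sub: "\<forall>i. Xs i \<subseteq> blk_space blk i"
    and J_diff: "\<forall>i z. J i differentiable (at z)"
    and gamma: "\<forall>i j. i \<noteq> j \<longrightarrow> (\<forall>t\<in>Th i j. \<forall>y\<in>Xs i.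
                   \<gamma> i j y t \<in> Xs j \<and> (\<lambda>y. \<gamma> i j y t) differentiable (at y within blk_space blk i))"
    and feas: "feasible blk Xs Th J \<gamma> xs \<theta>s"
    and opt: "\<forall>x \<theta>. feasible blk Xs Th J \<gamma> x \<theta> \<longrightarrow> F xs \<le> F x"
    and pcvx: "\<forall>i. pseudo_convex_on (blk_space blk i) (Xs i)
                     (\<lambda>y. J i (conj_point blk \<gamma> i (\<theta>s i) y))"
  shows "\<forall>i. \<forall>y\<in>Xs i. J i (conj_point blk \<gamma> i (\<theta>s i) (blk_proj blk i xs))
                        \<le> J i (conj_point blk \<gamma> i (\<theta>s i) y)"
proof (intro allI ballI)
  fix i b assume b: "b \<in> Xs i"
  let ?E = "blk_space blk i"
  let ?a = "blk_proj blk i xs"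
  let ?g = "\<lambda>y. J i (conj_point blk \<gamma> i (\<theta>s i) y)"
  let ?c = "conj_point blk \<gamma> i (\<theta>s i) ?a"
  let ?DJ = "frechet_derivative (J i) (at ?c)"
  let ?Dg = "\<lambda>j. frechet_derivative (\<lambda>y. \<gamma> i j y (\<theta>s i j)) (at ?a within ?E)"
  note F = feas[unfolded feasible_def]
  have aX: "?a \<in> Xs i" using conjunct1[OF conjunct2[OF F]] by (rule spec)
  have aE: "?a \<in> ?E" using aX X_sub by blast
  have bE: "b \<in> ?E" using b X_sub by blast
  have vE: "b - ?a \<in> ?E" by (rule subspace_diff[OF blk_space_subspace bE aE])
  have th: "\<theta>s i j \<in> Th i j" if ji0: "j \<noteq> i" for j
  proof -
    from ji0 have ij0: "i \<noteq> j" by simp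
    show ?thesis by (rule conjunct1[OF F, rule_format, OF ij0])
  qed
  have stat: "?DJ (blk_proj blk i (b - ?a)) + (\<Sum>j\<in>-{i}. ?DJ (blk_proj blk j (?Dg j (b - ?a)))) = 0"
    using conjunct1[OF conjunct2[OF conjunct2[OF F]], rule_format, OF vE] .
  have gd: "\<And>j. j \<in> -{i} \<Longrightarrow> ((\<lambda>y. \<gamma> i j y (\<theta>s i j)) has_derivative ?Dg j) (at ?a within ?E)"
  proof -
    fix j assume j: "j \<in> -{i}"
    then have ji: "j \<noteq> i" and ij: "i \<noteq> j" by auto
    have "(\<lambda>y. \<gamma> i j y (\<theta>s i j)) differentiable (at ?a within ?E)"
      using conjunct2[OF gamma[rule_format, OF ij th[OF ji] aX]] .
    then show "((\<lambda>y. \<gamma> i j y (\<theta>s i j)) has_derivative ?Dg j) (at ?a within ?E)"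
      by (rule iffD1[OF frechet_derivative_works])
  qed
  have cd: "(conj_point blk \<gamma> i (\<theta>s i) has_derivative
      (\<lambda>v. blk_proj blk i v + (\<Sum>j\<in>-{i}. blk_proj blk j (?Dg j v)))) (at ?a within ?E)"
    unfolding conj_point_def[abs_def]
  proof (intro has_derivative_add has_derivative_sum)
    show "(blk_proj blk i has_derivative blk_proj blk i) (at ?a within ?E)"
      by (rule bounded_linear_imp_has_derivative[OF blk_proj_bl])
    fix j assume jj: "j \<in> -{i}"
    show "((\<lambda>y. blk_proj blk j (\<gamma> i j y (\<theta>s i j))) has_derivative
        (\<lambda>v. blk_proj blk j (?Dg j v))) (at ?a within ?E)"
      by (rule bounded_linear.has_derivative[OF blk_proj_bl gd[OF jj]])
  qed
  have Jd: "(J i has_derivative ?DJ) (at ?c)"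
    using J_diff frechet_derivative_works by blast
  have comp: "(?g has_derivative (\<lambda>v. ?DJ (blk_proj blk i v + (\<Sum>j\<in>-{i}. blk_proj blk j (?Dg j v)))))
      (at ?a within ?E)"
    using has_derivative_compose[OF cd Jd] by (simp add: o_def)
  have pc: "pseudo_convex_on ?E (Xs i) ?g" using pcvx by blast
  have gdiff: "?g differentiable (at ?a within ?E)" using pc aX unfolding pseudo_convex_on_def by blast
  have eq: "frechet_derivative ?g (at ?a within ?E) (b - ?a)
      = ?DJ (blk_proj blk i (b - ?a) + (\<Sum>j\<in>-{i}. blk_proj blk j (?Dg j (b - ?a))))"
    by (rule deriv_agree_subspace[OF iffD1[OF frechet_derivative_works gdiff] comp
          blk_space_subspace aE vE])
  have lin: "linear ?DJ" using Jd has_derivative_linear by blast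
  have "?DJ (blk_proj blk i (b - ?a) + (\<Sum>j\<in>-{i}. blk_proj blk j (?Dg j (b - ?a))))
      = ?DJ (blk_proj blk i (b - ?a)) + (\<Sum>j\<in>-{i}. ?DJ (blk_proj blk j (?Dg j (b - ?a))))"
    using lin by (simp add: linear_add linear_sum)
  with eq stat have "frechet_derivative ?g (at ?a within ?E) (b - ?a) \<ge> 0" by simp
  then show "?g ?a \<le> ?g b" using pc aX b unfolding pseudo_convex_on_def by blast
qed

end
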